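(* Let $r\geq 3$ be an integer such that an affine plane of order $r$ exists, and let $\mathcal{H}_r=(V\setminus S,E)$ be the hypergraph defined below. Under the uniform weight assignment, the top-level of $\mathcal{H}_r$ is perturbable.
   Context: An affine plane of order $r$ is an $r$-uniform hypergraph on $r^2$ points with $r(r+1)$ lines such that every pair of distinct points lies in exactly one line; its lines partition into $r+1$ parallel classes $L_1,\dots,L_{r+1}$, each consisting of $r$ pairwise disjoint lines covering all points. Given an affine plane $\mathcal{G}_r=(V,\mathcal{L})$ of order $r$, label its points $v_{i,j}$, $i,j\in[r]$, so that $L_1=\{\{v_{i,1},\dots,v_{i,r}\}: i\in[r]\}$ (rows) and $L_{r+1}=\{\{v_{1,i},\dots,v_{r,i}\}: i\in[r]\}$ (columns). Let $S=\{v_{r,i}: i\in[r-1]\}\cup\{v_{r-1,r}\}$. The hypergraph $\mathcal{H}_r$ has vertex set $V\setminus S$ and edge set $E=\{e\setminus S: e\in\mathcal{L}\setminus L_{r+1}\}$ (i.e. delete the lines of $L_{r+1}$ and remove the vertices of $S$ from each remaining line). A weight assignment on a hypergraph with vertex set $W$ is a function $w:W\to\mathbb{R}_{\ge 0}$ with $\sum_{v\in W}w(v)=1$; the uniform weight assignment is $w(v)=1/|W|$; the weight of a set $T$ is $w(T)=\sum_{v\in T}w(v)$. The top-level of a hypergraph $H=(W,E)$ with respect to $w$ is the hypergraph $(W,E')$ where $E'$ is the set of edges of maximum weight. A perturbation on a hypergraph $H=(W,E)$ is a function $p:W\to\mathbb{R}$ with $\sum_{v\in W}p(v)=0$ and $\sum_{v\in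 e}p(v)<0$ for every $e\in E$; $H$ is perturbable if a perturbation exists. *)

theory Defs
  imports Complex_Main
begin

definition affine_plane :: "nat \<Rightarrow> 'a set \<Rightarrow> 'a set set \<Rightarrow> bool" where
  "affine_plane r V L \<longleftrightarrow>
     finite V \<and> card V = r^2 \<and> L \<subseteq> Pow V \<and> (\<forall>l\<in>L. card l = r) \<and>
     finite L \<and> card L = r * (r + 1) \<and>
     (\<forall>x\<in>V. \<forall>y\<in>V. x \<noteq> y \<longrightarrow> (\<exists>!l. l \<in> L \<and> x \<in> l \<and> y \<in> l))"

definition parallel_class :: "nat \<Rightarrow> 'a set \<Rightarrow> 'a set set \<Rightarrow> 'a set set \<Rightarrow> bool" where
  "parallel_class r V L P \<longleftrightarrow>
     P \<subseteq> L \<and> card P = r \<and> (\<forall>l1\<in>P. \<forall>l2\<in>P. l1 \<noteq> l2 \<longrightarrow> l1 \<inter> l2 = {}) \<and> \<Union>P = V"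

definition parallel_classes :: "nat \<Rightarrow> 'a set \<Rightarrow> 'a set set \<Rightarrow> (nat \<Rightarrow> 'a set set) \<Rightarrow> bool" where
  "parallel_classes r V L P \<longleftrightarrow>
     (\<forall>i\<in>{1..r+1}. parallel_class r V L (P i)) \<and>
     (\<forall>i\<in>{1..r+1}. \<forall>j\<in>{1..r+1}. i \<noteq> j \<longrightarrow> P i \<inter> P j = {}) \<and>
     (\<Union>i\<in>{1..r+1}. P i) = L"

definition weight :: "('a \<Rightarrow> real) \<Rightarrow> 'a set \<Rightarrow> real" where
  "weight w T = (\<Sum>v\<in>T. w v)"

definition uniform_weight :: "'a set \<Rightarrow> 'a \<Rightarrow> real" where
  "uniform_weight W = (\<lambda>v. 1 / real (card W))"

text \<open>Edge set of the top-level of (W, E) w.r.t. w (its vertex set is still W).\<close>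
definition top_level_edges :: "'a set set \<Rightarrow> ('a \<Rightarrow> real) \<Rightarrow> 'a set set" where
  "top_level_edges E w = {e \<in> E. \<forall>f\<in>E. weight w f \<le> weight w e}"

definition perturbation :: "'a set \<Rightarrow> 'a set set \<Rightarrow> ('a \<Rightarrow> real) \<Rightarrow> bool" where
  "perturbation W E p \<longleftrightarrow> (\<Sum>v\<in>W. p v) = 0 \<and> (\<forall>e\<in>E. (\<Sum>v\<in>e. p v) < 0)"

definition perturbable :: "'a set \<Rightarrow> 'a set set \<Rightarrow> bool" where
  "perturbable W E \<longleftrightarrow> (\<exists>p. perturbation W E p)"

definition S_set :: "nat \<Rightarrow> (nat \<Rightarrow> nat \<Rightarrow> 'a) \<Rightarrow> 'a set" where
  "S_set r v = {v r i | i. i \<in> {1..r-1}} \<union> {v (r - 1) r}"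

definition H_edges :: "nat \<Rightarrow> 'a set set \<Rightarrow> (nat \<Rightarrow> 'a set set) \<Rightarrow> 'a set \<Rightarrow> 'a set set" where
  "H_edges r L P S = (\<lambda>e. e - S) ` (L - P (r + 1))"

end

theory Submission
  imports Defs
begin

lemma sum_if_card: "finite A \<Longrightarrow> (\<Sum>x\<in>A. if x\<in>B then 1 else 0 :: real) = real (card (A\<inter>B))"
  by (simp add: sum.If_cases Int_def)

lemma sum_if_pt: "finite A \<Longrightarrow> (\<Sum>x\<in>A. if x = b then 1 else 0 :: real) = (if b \<in> A then 1 else 0)"
  by simp

theorem mainTheorem3:
  fixes r :: nat and V :: "'a set" and L :: "'a set set"
    and P :: "nat \<Rightarrow> 'a set set" and v :: "nat \<Rightarrow> nat \<Rightarrow> 'a"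
  assumes "r \<ge> 3"
    and "affine_plane r V L"
    and "parallel_classes r V L P"
    and "bij_betw (\<lambda>(i, j). v i j) ({1..r} \<times> {1..r}) V"
    and "P 1 = {{v i j | j. j \<in> {1..r}} | i. i \<in> {1..r}}"
    and "P (r + 1) = {{v j i | j. j \<in> {1..r}} | i. i \<in> {1..r}}"
  shows "perturbable (V - S_set r v)
           (top_level_edges (H_edges r L P (S_set r v)) (uniform_weight (V - S_set r v)))"
proof -
  define A where "A = {1..r} \<times> {1..r}"
  define \<phi> where "\<phi> = (\<lambda>(i::nat, j::nat). v i j)"
  have bij: "bij_betw \<phi> A V" using assms(4) by (simp add: A_def \<phi>_def)
  have vinj: "a = c \<and> b = d" if "a\<in>{1..r}" "b\<in>{1..r}" "c\<in>{1..r}" "d\<in>{1..r}" "v a b = v c d" for a b c d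
  proof -
    have "\<phi> (a,b) = \<phi> (c,d)" using that(5) by (simp add: \<phi>_def)
    moreover have "(a,b) \<in> A" "(c,d) \<in> A" using that by (auto simp: A_def)
    ultimately have "(a,b) = (c,d)" using inj_onD[OF bij_betw_imp_inj_on[OF bij]] by blast
    then show ?thesis by simp
  qed
  have vV: "v a b \<in> V" if "a\<in>{1..r}" "b\<in>{1..r}" for a b
  proof -
    have "(a,b) \<in> A" using that by (auto simp: A_def)
    then have "\<phi> (a,b) \<in> V" using bij_betw_imp_surj_on[OF bij] by blast
    then show ?thesis by (simp add: \<phi>_def)
  qed
  have Vv: "\<exists>a\<in>{1..r}. \<exists>b\<in>{1..r}. x = v a b" if "x \<in> V" for x
  proof -
    have "x \<in> \<phi> ` A" using bij_betw_imp_surj_on[OF bij] that by blast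
    then obtain a b where "(a,b) \<in> A" "x = \<phi> (a,b)" by auto
    then have "a \<in> {1..r}" "b \<in> {1..r}" "x = v a b" by (auto simp: A_def \<phi>_def)
    then show ?thesis by blast
  qed
  define ri where "ri x = (SOME i. i \<in> {1..r} \<and> (\<exists>b\<in>{1..r}. x = v i b))" for x
  have ri: "ri x \<in> {1..r} \<and> (\<exists>b\<in>{1..r}. x = v (ri x) b)" if "x \<in> V" for x
    unfolding ri_def by (rule someI_ex) (use Vv[OF that] in blast)
  define row where "row i = {v i j | j. j \<in> {1..r}}" for i
  have P1: "P 1 = row ` {1..r}" using assms(5) by (auto simp: row_def)
  have r1: "r + 1 \<in> {1..r+1}" "(1::nat) \<in> {1..r+1}" "(1::nat) \<noteq> r + 1" using assms(1) by auto
  from assms(3) r1 have pc1: "parallel_class r V L (P 1)" and disj: "P 1 \<inter> P (r+1) = {}"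
    unfolding parallel_classes_def by blast+
  have rowL: "row i \<in> L" if "i \<in> {1..r}" for i using pc1 P1 that unfolding parallel_class_def by blast
  have finV: "finite V" and LV: "L \<subseteq> Pow V" and cardL: "\<And>l. l \<in> L \<Longrightarrow> card l = r"
    and uq: "\<forall>x\<in>V. \<forall>y\<in>V. x \<noteq> y \<longrightarrow> (\<exists>!l. l \<in> L \<and> x \<in> l \<and> y \<in> l)"
    using assms(2) unfolding affine_plane_def by auto
  have uniq: "l1 = l2" if "l1\<in>L" "l2\<in>L" "x\<in>l1" "y\<in>l1" "x\<in>l2" "y\<in>l2" "x\<noteq>y" for l1 l2 x y
  proof -
    have "x \<in> V" "y \<in> V" using that LV by auto
    then show ?thesis using uq that by metis
  qed
  define S where "S = S_set r v"
  have S_eq: "S = {v r i | i. i \<in> {1..r-1}} \<union> {v (r-1) r}" by (simp add: S_def S_set_def)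
  define W where "W = V - S"
  define R where "R = {v (r-1) j | j. j\<in>{1..r-1}}"
  define vrr where "vrr = v r r"
  define q where "q = (\<lambda>x. (if x \<in> R then 1 else 0) - (if x = vrr then 1 else 0) :: real)"
  define K where "K = (\<Sum>x\<in>W. q x) / real (card W)"
  define p where "p x = q x - K" for x
  have finW: "finite W" using finV W_def by auto
  have RW: "R \<subseteq> W"
  proof
    fix x assume "x \<in> R"
    then obtain j where j: "j \<in> {1..r-1}" "x = v (r-1) j" using R_def by auto
    have "x \<in> V" using j vV assms(1) by auto
    moreover have "x \<notin> S"
    proof
      assume "x \<in> S"
      then consider (a) i where "i \<in> {1..r-1}" "x = v r i" | (b) "x = v (r-1) r" unfolding S_eq by blast
      then show False
      proof cases
        case a
        then have "r - 1 = r" using vinj[of "r-1" j r i] j assms(1) by auto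
        then show False using assms(1) by simp
      next
        case b
        then have "j = r" using vinj[of "r-1" j "r-1" r] j assms(1) by auto
        then show False using j assms(1) by simp
      qed
    qed
    ultimately show "x \<in> W" by (simp add: W_def)
  qed
  have vrrW: "vrr \<in> W"
  proof -
    have "vrr \<in> V" using vV assms(1) vrr_def by auto
    moreover have "vrr \<notin> S"
    proof
      assume "vrr \<in> S"
      then consider (a) i where "i \<in> {1..r-1}" "vrr = v r i" | (b) "vrr = v (r-1) r" unfolding S_eq by blast
      then show False
      proof cases
        case a
        then have "r = i" using vinj[of r r r i] assms(1) vrr_def by auto
        then show False using a assms(1) by simp
      next
        case b
        then have "r = r - 1" using vinj[of r r "r-1" r] assms(1) vrr_def by auto
        then show False using assms(1) by simp
      qed
    qed
    ultimately show ?thesis by (simp add: W_def)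
  qed
  have cardR: "card R = r - 1"
  proof -
    have "R = (\<lambda>j. v (r-1) j) ` {1..r-1}" by (auto simp: R_def)
    moreover have "inj_on (\<lambda>j. v (r-1) j) {1..r-1}"
      unfolding inj_on_def
    proof (intro ballI impI)
      fix x y assume "x \<in> {1..r-1}" "y \<in> {1..r-1}" "v (r-1) x = v (r-1) y"
      then show "x = y" using vinj[of "r-1" x "r-1" y] assms(1) by auto
    qed
    ultimately show ?thesis by (simp add: card_image)
  qed
  have sumW: "(\<Sum>x\<in>W. q x) = real (r - 1) - 1"
    using finW RW vrrW cardR
    by (simp add: q_def sum_subtractf sum_if_card sum_if_pt Int_absorb1 del: sum.delta)
  have cardW: "card W > 0" using finW vrrW by (auto simp: card_gt_0_iff)
  have Kpos: "K > 0" unfolding K_def sumW using assms(1) cardW by simp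
  have wt: "weight (uniform_weight W) T = real (card T) / real (card W)" for T
    by (simp add: weight_def uniform_weight_def)
  have row1S: "row 1 \<inter> S = {}"
  proof -
    have "x \<notin> S" if "x \<in> row 1" for x
    proof
      assume xS: "x \<in> S"
      obtain j where j: "j \<in> {1..r}" "x = v 1 j" using \<open>x \<in> row 1\<close> row_def by auto
      from xS consider (a) i where "i \<in> {1..r-1}" "x = v r i" | (b) "x = v (r-1) r" unfolding S_eq by blast
      then show False
      proof cases
        case a
        have e: "v 1 j = v r i" using j a by simp
        have "1 \<in> {1..r}" "r \<in> {1..r}" "i \<in> {1..r}" using a assms(1) by auto
        then have "1 = r" using vinj[OF _ j(1) _ _ e] by blast
        then show False using assms(1) by simp
      next
        case b
        have e: "v 1 j = v (r-1) r" using j b by simp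
        have "1 \<in> {1..r}" "r \<in> {1..r}" "r - 1 \<in> {1..r}" using assms(1) by auto
        then have "1 = r - 1" using vinj[OF _ j(1) _ _ e] by blast
        then show False using assms(1) by simp
      qed
    qed
    then show ?thesis by blast
  qed
  have rowcard: "card (row i) = r" if "i \<in> {1..r}" for i using cardL rowL that by blast
  have rowP1: "row i \<in> P 1" if "i \<in> {1..r}" for i using P1 that by blast
  have top: "e \<in> L \<and> e \<inter> S = {} \<and> card e = r \<and> (\<Sum>x\<in>e. q x) \<le> 0"
    if eT: "e \<in> top_level_edges (H_edges r L P S) (uniform_weight W)" for e
  proof -
    from eT have eH: "e \<in> H_edges r L P S"
      and emax: "\<forall>f\<in>H_edges r L P S. weight (uniform_weight W) f \<le> weight (uniform_weight W) e"
      unfolding top_level_edges_def by auto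
    from eH obtain l where l: "l \<in> L" "l \<notin> P (r+1)" "e = l - S" unfolding H_edges_def by auto
    have r1in: "(1::nat) \<in> {1..r}" using assms(1) by auto
    have "row 1 \<notin> P (r+1)" using rowP1[OF r1in] disj by blast
    then have "row 1 - S \<in> H_edges r L P S" unfolding H_edges_def using rowL[OF r1in] by blast
    then have "real (card (row 1 - S)) / real (card W) \<le> real (card (l - S)) / real (card W)"
      using emax l(3) wt by metis
    then have "card (row 1 - S) \<le> card (l - S)" using cardW
      by (simp add: divide_le_cancel)
    moreover have "row 1 - S = row 1" using row1S by blast
    ultimately have c1: "r \<le> card (l - S)" using rowcard[OF r1in] by simp
    have finl: "finite l" using l(1) LV finV finite_subset by blast
    have "card l = r" using cardL l(1) by simp
    then have "card (l - S) = card l" using c1 card_mono[OF finl, of "l - S"] by auto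
    then have lS: "l - S = l" using card_subset_eq[OF finl, of "l - S"] by auto
    then have eL: "e = l" using l(3) by simp
    have eS: "e \<inter> S = {}" using lS eL by blast
    have ce: "card e = r" using eL \<open>card l = r\<close> by simp
    have fine: "finite e" using eL finl by simp
    have eV: "e \<subseteq> V" using eL l(1) LV by blast
    have sq: "(\<Sum>x\<in>e. q x) = real (card (e \<inter> R)) - (if vrr \<in> e then 1 else 0)"
      using fine by (simp add: q_def sum_subtractf sum_if_card sum_if_pt del: sum.delta)
    have "(\<Sum>x\<in>e. q x) \<le> 0"
    proof (cases "e \<in> P 1")
      case True
      then obtain i where i: "i \<in> {1..r}" "e = row i" using P1 by auto
      have "e \<inter> R = {}"
      proof (rule ccontr)
        assume "e \<inter> R \<noteq> {}"
        then obtain y where y: "y \<in> e" "y \<in> R" by blast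
        obtain k where k: "k \<in> {1..r}" "y = v i k" using y(1) i row_def by auto
        obtain j where j: "j \<in> {1..r-1}" "y = v (r-1) j" using y(2) R_def by auto
        have "i = r - 1" using vinj[of i k "r-1" j] i k j assms(1) by auto
        then have "v (r-1) r \<in> e" using i assms(1) row_def by auto
        moreover have "v (r-1) r \<in> S" using S_eq by auto
        ultimately show False using eS by blast
      qed
      then show ?thesis using sq by simp
    next
      case False
      have onerow: "x = y" if "x \<in> e" "y \<in> e" "x \<in> row i" "y \<in> row i" "i \<in> {1..r}" for x y i
      proof (rule ccontr)
        assume "x \<noteq> y"
        then have "e = row i" using uniq[of e "row i" x y] eL l(1) rowL that by blast
        then show False using False rowP1 that by blast
      qed
      have Rrow: "R \<subseteq> row (r-1)" unfolding R_def row_def by auto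
      have rm1: "r - 1 \<in> {1..r}" using assms(1) by auto
      have c1: "card (e \<inter> R) \<le> 1"
        using card_le_Suc0_iff_eq[of "e \<inter> R"] fine onerow[OF _ _ _ _ rm1] Rrow by auto
      have vrre: "vrr \<in> e"
      proof (rule ccontr)
        assume nv: "vrr \<notin> e"
        have inj: "inj_on ri e"
        proof (rule inj_onI)
          fix x y assume xy: "x \<in> e" "y \<in> e" "ri x = ri y"
          have xV: "x \<in> V" "y \<in> V" using xy eV by auto
          obtain b1 where b1: "b1 \<in> {1..r}" "x = v (ri x) b1" using ri[OF xV(1)] by blast
          obtain b2 where b2: "b2 \<in> {1..r}" "y = v (ri y) b2" using ri[OF xV(2)] by blast
          have "x \<in> row (ri x)" using b1 unfolding row_def by blast
          moreover have "y \<in> row (ri x)" using b2 xy(3) unfolding row_def by auto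
          ultimately show "x = y" using onerow xy ri[of x] eV by blast
        qed
        have img: "ri ` e \<subseteq> {1..r-1}"
        proof
          fix i assume "i \<in> ri ` e"
          then obtain x where x: "x \<in> e" "i = ri x" by blast
          have xV: "x \<in> V" using x eV by auto
          then obtain b where b: "b \<in> {1..r}" "x = v i b" "i \<in> {1..r}" using ri[OF xV] x(2) by blast
          show "i \<in> {1..r-1}"
          proof (rule ccontr)
            assume "i \<notin> {1..r-1}"
            then have ir: "i = r" using b(3) by auto
            show False
            proof (cases "b = r")
              case True
              have "x = vrr" using b(2) ir True vrr_def by simp
              then show False using nv x(1) by blast
            next
              case False
              have bb: "b \<in> {1..r-1}" using b(1) False by auto
              have "x = v r b" using b(2) ir by simp
              then have "x \<in> S" using S_eq bb by blast
              then show False using eS x by blast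
            qed
          qed
        qed
        have "card e \<le> card {1..r-1}" using card_inj_on_le[OF inj img] by simp
        then show False using ce assms(1) by simp
      qed
      show ?thesis using sq c1 vrre by simp
    qed
    then show ?thesis using eL l(1) eS ce by blast
  qed
  have "perturbation W (top_level_edges (H_edges r L P S) (uniform_weight W)) p"
    unfolding perturbation_def
  proof (intro conjI ballI)
    show "(\<Sum>x\<in>W. p x) = 0"
      using cardW by (simp add: p_def sum_subtractf K_def)
  next
    fix e assume "e \<in> top_level_edges (H_edges r L P S) (uniform_weight W)"
    note t = top[OF this]
    have "(\<Sum>x\<in>e. p x) = (\<Sum>x\<in>e. q x) - real r * K"
      using t by (simp add: p_def sum_subtractf)
    also have "\<dots> < 0"
    proof -
      have "real r * K > 0" using Kpos assms(1) by simp
      then show ?thesis using t by linarith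
    qed
    finally show "(\<Sum>x\<in>e. p x) < 0" .
  qed
  then show ?thesis unfolding perturbable_def W_def S_def by blast
qed

end
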